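(* Let $(x^{(k)})_{k\in\mathbb N}$ be a sequence of nonabsorbing mixed action profiles in $X$ converging to $x$, and suppose ${\cal E}_J(x^{(k)})\ne\emptyset$ for every $k$. Then $x\in X$ and ${\cal E}_J(x)\ne\emptyset$.
   Context: $I$ is a finite set of players, $A_i$ finite nonempty action sets, $A=\prod_iA_i$, $p:A\to[0,1]$ an absorption probability function. Let $\Xi_i=\Delta(A_i)$, $\Xi=\prod_i\Xi_i$, and for $x\in\Xi$ let $p(x)=\sum_{a\in A}p(a)\prod_jx_j(a_j)$ (multilinear extension; similarly for partially pure profiles such as $(a_J,x_{-J})$). Let $B=\{a\in A:p(a)=0\}$ and let $X=\{x\in\Xi: p(x)=0\}$ be the set of nonabsorbing mixed action profiles (equivalently, mixed profiles whose support $\prod_i{\rm supp}(x_i)$ is contained in a connected component of the graph on $B$ where two profiles are adjacent iff they differ in exactly one player's action). For $x\in X$, a pair $(J,a_J)$ with $\emptyset\ne J\subseteq I$ and $a_J\in\prod_{i\in J}A_i$ is an exit at $x$ if $p(a_J,x_{-J})>0$ and $p(a_{J'},x_{-J'})=0$ for every proper subset $J'\subsetneq J$. It is a joint exit if $|J|\ge2$. ${\cal E}_J(x)$ denotes the set of joint exits at $x$. *)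

theory Defs
  imports "HOL-Analysis.Analysis"
begin

(* Players: the finite type 'i (I = UNIV). Actions of player i: the finite nonempty set A i.
   A mixed action profile x assigns to each player i a probability vector x i on A i
   (zero outside A i). *)

definition mixed_profiles :: "('i \<Rightarrow> 'a set) \<Rightarrow> ('i \<Rightarrow> 'a \<Rightarrow> real) set" where
  "mixed_profiles A = {x. \<forall>i. (\<forall>c. 0 \<le> x i c) \<and> (\<forall>c. c \<notin> A i \<longrightarrow> x i c = 0)
                                \<and> (\<Sum>c\<in>A i. x i c) = 1}"

definition mext :: "('i::finite \<Rightarrow> 'a set) \<Rightarrow> (('i \<Rightarrow> 'a) \<Rightarrow> real) \<Rightarrow> ('i \<Rightarrow> 'a \<Rightarrow> real) \<Rightarrow> real" where
  "mext A p x = (\<Sum>a\<in>Pi\<^sub>E UNIV A. p a * (\<Prod>j\<in>UNIV. x j (a j)))"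

definition pure_dev :: "'i set \<Rightarrow> ('i \<Rightarrow> 'a) \<Rightarrow> ('i \<Rightarrow> 'a \<Rightarrow> real) \<Rightarrow> ('i \<Rightarrow> 'a \<Rightarrow> real)" where
  "pure_dev J aJ x = (\<lambda>i. if i \<in> J then (\<lambda>c. if c = aJ i then 1 else 0) else x i)"

definition nonabsorbing :: "('i::finite \<Rightarrow> 'a set) \<Rightarrow> (('i \<Rightarrow> 'a) \<Rightarrow> real) \<Rightarrow> ('i \<Rightarrow> 'a \<Rightarrow> real) set" where
  "nonabsorbing A p = {x \<in> mixed_profiles A. mext A p x = 0}"

definition is_exit :: "('i::finite \<Rightarrow> 'a set) \<Rightarrow> (('i \<Rightarrow> 'a) \<Rightarrow> real) \<Rightarrow> ('i \<Rightarrow> 'a \<Rightarrow> real)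
                        \<Rightarrow> 'i set \<Rightarrow> ('i \<Rightarrow> 'a) \<Rightarrow> bool" where
  "is_exit A p x J aJ \<longleftrightarrow> J \<noteq> {} \<and> aJ \<in> Pi\<^sub>E J A \<and> mext A p (pure_dev J aJ x) > 0
      \<and> (\<forall>J'. J' \<subset> J \<longrightarrow> mext A p (pure_dev J' aJ x) = 0)"

definition joint_exits :: "('i::finite \<Rightarrow> 'a set) \<Rightarrow> (('i \<Rightarrow> 'a) \<Rightarrow> real) \<Rightarrow> ('i \<Rightarrow> 'a \<Rightarrow> real)
                            \<Rightarrow> ('i set \<times> ('i \<Rightarrow> 'a)) set" where
  "joint_exits A p x = {(J, aJ). is_exit A p x J aJ \<and> 2 \<le> card J}"

end

theory Submission
  imports Defs
begin

lemma comp_lim: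
  fixes xs :: "nat \<Rightarrow> ('i \<Rightarrow> 'a \<Rightarrow> real)"
  assumes "xs \<longlonglongrightarrow> x"
  shows "(\<lambda>k. xs k i c) \<longlonglongrightarrow> x i c"
proof -
  have c1: "continuous_on UNIV (\<lambda>f::'i\<Rightarrow>'a\<Rightarrow>real. f i)" by simp
  have "continuous_on UNIV (\<lambda>f::'i\<Rightarrow>'a\<Rightarrow>real. f i c)"
    using continuous_on_product_then_coordinatewise[OF c1] by simp
  then show ?thesis
    using continuous_on_tendsto_compose[OF _ assms] by fastforce
qed

lemma mext_nonneg:
  assumes "\<And>a. a \<in> Pi\<^sub>E UNIV A \<Longrightarrow> 0 \<le> p a" "\<And>j c. 0 \<le> y j c"
  shows "0 \<le> mext A p y"
  unfolding mext_def using assms by (intro sum_nonneg mult_nonneg_nonneg prod_nonneg) auto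

lemma mext_pos:
  assumes "\<And>a. a \<in> Pi\<^sub>E UNIV A \<Longrightarrow> 0 \<le> p a" "\<And>j c. 0 \<le> y j c" "\<And>i. finite (A i)"
  shows "0 < mext A p y \<longleftrightarrow> (\<exists>a\<in>Pi\<^sub>E UNIV A. 0 < p a \<and> (\<forall>j. 0 < y j (a j)))"
proof
  have fin: "finite (Pi\<^sub>E UNIV A)" using assms(3) by (simp add: finite_PiE)
  assume "0 < mext A p y"
  have "\<not> (\<forall>a\<in>Pi\<^sub>E UNIV A. p a * (\<Prod>j\<in>UNIV. y j (a j)) = 0)"
  proof
    assume "\<forall>a\<in>Pi\<^sub>E UNIV A. p a * (\<Prod>j\<in>UNIV. y j (a j)) = 0"
    then have "mext A p y = 0" unfolding mext_def by (intro sum.neutral) blast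
    then show False using \<open>0 < mext A p y\<close> by simp
  qed
  then obtain a where a: "a \<in> Pi\<^sub>E UNIV A" "p a * (\<Prod>j\<in>UNIV. y j (a j)) \<noteq> 0" by blast
  have "0 < p a" using a assms(1)[of a] by (metis less_eq_real_def mult_zero_left)
  moreover have "0 < y j (a j)" for j
  proof -
    have "y j (a j) \<noteq> 0" using a(2) by (auto simp: prod_zero_iff)
    then show ?thesis using assms(2)[of j "a j"] by linarith
  qed
  ultimately show "\<exists>a\<in>Pi\<^sub>E UNIV A. 0 < p a \<and> (\<forall>j. 0 < y j (a j))" using a(1) by blast
next
  have fin: "finite (Pi\<^sub>E UNIV A)" using assms(3) by (simp add: finite_PiE)
  assume "\<exists>a\<in>Pi\<^sub>E UNIV A. 0 < p a \<and> (\<forall>j. 0 < y j (a j))"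
  then obtain a where a: "a \<in> Pi\<^sub>E UNIV A" "0 < p a" "\<forall>j. 0 < y j (a j)" by blast
  have "0 < p a * (\<Prod>j\<in>UNIV. y j (a j))" using a by (simp add: prod_pos)
  also have "\<dots> \<le> mext A p y" unfolding mext_def
    by (rule member_le_sum[OF a(1) _ fin])
       (use assms(1,2) in \<open>auto intro!: mult_nonneg_nonneg prod_nonneg\<close>)
  finally show "0 < mext A p y" .
qed

lemma pure_dev_restrict:
  assumes "J \<subseteq> K"
  shows "pure_dev J (restrict a K) x = pure_dev J a x"
  using assms unfolding pure_dev_def by (auto intro!: ext)

lemma pure_dev_nonneg:
  assumes "\<And>j c. 0 \<le> x j c" shows "0 \<le> pure_dev J a x j c"
  using assms unfolding pure_dev_def by auto

theorem mainTheorem5: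
  fixes A :: "'i::finite \<Rightarrow> 'a set"
    and p :: "('i \<Rightarrow> 'a) \<Rightarrow> real"
    and xs :: "nat \<Rightarrow> ('i \<Rightarrow> 'a \<Rightarrow> real)"
    and x :: "'i \<Rightarrow> 'a \<Rightarrow> real"
  assumes "\<And>i. finite (A i)"
    and "\<And>i. A i \<noteq> {}"
    and "\<And>a. a \<in> Pi\<^sub>E UNIV A \<Longrightarrow> 0 \<le> p a \<and> p a \<le> 1"
    and "\<And>k. xs k \<in> nonabsorbing A p"
    and "xs \<longlonglongrightarrow> x"
    and "\<And>k. joint_exits A p (xs k) \<noteq> {}"
  shows "x \<in> nonabsorbing A p \<and> joint_exits A p x \<noteq> {}"
proof -
  note fA = assms(1)
  have pnn: "\<And>a. a \<in> Pi\<^sub>E UNIV A \<Longrightarrow> 0 \<le> p a" using assms(3) by blast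
  have lim: "\<And>i c. (\<lambda>k. xs k i c) \<longlonglongrightarrow> x i c" using comp_lim[OF assms(5)] .
  have xsm: "\<And>k. xs k \<in> mixed_profiles A" and xs0: "\<And>k. mext A p (xs k) = 0"
    using assms(4) unfolding nonabsorbing_def by auto
  have xsnn: "\<And>k j c. 0 \<le> xs k j c" using xsm unfolding mixed_profiles_def by auto
  have xnn: "\<And>j c. 0 \<le> x j c"
    by (rule LIMSEQ_le_const[OF lim]) (use xsnn in auto)
  have xout: "\<And>j c. c \<notin> A j \<Longrightarrow> x j c = 0"
  proof -
    fix j c assume "c \<notin> A j"
    then have "\<And>k. xs k j c = 0" using xsm unfolding mixed_profiles_def by auto
    then have "(\<lambda>k. xs k j c) = (\<lambda>k. 0)" by (intro ext)
    then have "(\<lambda>k. 0::real) \<longlonglongrightarrow> x j c" using lim[of j c] by simp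
    then show "x j c = 0" by (simp add: LIMSEQ_const_iff)
  qed
  have xsum: "\<And>j. (\<Sum>c\<in>A j. x j c) = 1"
  proof -
    fix j
    have "(\<lambda>k. \<Sum>c\<in>A j. xs k j c) \<longlonglongrightarrow> (\<Sum>c\<in>A j. x j c)"
      by (intro tendsto_sum lim)
    moreover have "\<And>k. (\<Sum>c\<in>A j. xs k j c) = 1" using xsm unfolding mixed_profiles_def by auto
    ultimately have "(\<lambda>k. 1::real) \<longlonglongrightarrow> (\<Sum>c\<in>A j. x j c)" by simp
    then show "(\<Sum>c\<in>A j. x j c) = 1" by (simp add: LIMSEQ_const_iff)
  qed
  have xm: "x \<in> mixed_profiles A" unfolding mixed_profiles_def using xnn xout xsum by auto
  have fS: "finite (SIGMA i:UNIV. A i)" using fA by (intro finite_SigmaI) auto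
  have "eventually (\<lambda>k. \<forall>ic\<in>(SIGMA i:UNIV. A i). 0 < x (fst ic) (snd ic) \<longrightarrow> 0 < xs k (fst ic) (snd ic)) sequentially"
  proof (rule eventually_ball_finite[OF fS], rule ballI)
    fix ic :: "'i \<times> 'a"
    show "eventually (\<lambda>k. 0 < x (fst ic) (snd ic) \<longrightarrow> 0 < xs k (fst ic) (snd ic)) sequentially"
    proof (cases "0 < x (fst ic) (snd ic)")
      case True
      then show ?thesis using order_tendstoD(1)[OF lim True] by (auto elim: eventually_mono)
    qed simp
  qed
  then obtain k where kS: "\<And>i c. c \<in> A i \<Longrightarrow> 0 < x i c \<Longrightarrow> 0 < xs k i c"
    using eventually_sequentially by force
  have supp: "\<And>i c. 0 < x i c \<Longrightarrow> 0 < xs k i c"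
    using kS xout by (metis less_irrefl)
  have x0: "mext A p x = 0"
  proof (rule ccontr)
    assume "mext A p x \<noteq> 0"
    then have "0 < mext A p x" using mext_nonneg[of A p "x", OF pnn xnn] by linarith
    then obtain a where "a \<in> Pi\<^sub>E UNIV A" "0 < p a" "\<forall>j. 0 < x j (a j)"
      using mext_pos[of A p "x", OF pnn xnn fA] by blast
    then have "0 < mext A p (xs k)" using mext_pos[of A p "xs k", OF pnn xsnn fA] supp by blast
    then show False using xs0 by simp
  qed
  have xX: "x \<in> nonabsorbing A p" using xm x0 unfolding nonabsorbing_def by auto
  obtain J aJ where ex: "is_exit A p (xs k) J aJ" and cJ: "2 \<le> card J"
    using assms(6)[of k] unfolding joint_exits_def by auto
  have pdnn: "\<And>J a j c. 0 \<le> pure_dev J a (xs k) j c" by (rule pure_dev_nonneg[OF xsnn])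
  have pdnnx: "\<And>J a j c. 0 \<le> pure_dev J a x j c" by (rule pure_dev_nonneg[OF xnn])
  obtain a where a: "a \<in> Pi\<^sub>E UNIV A" "0 < p a" "\<forall>j. 0 < pure_dev J aJ (xs k) j (a j)"
    using ex mext_pos[of A p "pure_dev J aJ (xs k)", OF pnn pdnn fA] unfolding is_exit_def by blast
  have aJ: "a j = aJ j" if "j \<in> J" for j
  proof -
    have "0 < pure_dev J aJ (xs k) j (a j)" using a(3) by blast
    then show ?thesis using that by (auto simp: pure_dev_def split: if_splits)
  qed
  have aout: "0 < xs k j (a j)" if "j \<notin> J" for j
  proof -
    have "0 < pure_dev J aJ (xs k) j (a j)" using a(3) by blast
    then show ?thesis using that by (auto simp: pure_dev_def)
  qed
  define F where "F = {K. 0 < mext A p (pure_dev K a x)}"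
  have "UNIV \<in> F" unfolding F_def using mext_pos[of A p "pure_dev UNIV a x", OF pnn pdnnx fA] a(1,2)
    unfolding pure_dev_def by auto
  then obtain K where K: "K \<in> F" and Kmin: "\<And>K'. K' \<in> F \<Longrightarrow> card K \<le> card K'"
    using ex_has_least_nat[of "\<lambda>K. K \<in> F" UNIV card] by blast
  have Kpos: "0 < mext A p (pure_dev K a x)" using K unfolding F_def by simp
  have Kne: "K \<noteq> {}"
  proof
    assume "K = {}"
    then have "pure_dev K a x = x" unfolding pure_dev_def by auto
    then show False using Kpos x0 by simp
  qed
  have sub0: "mext A p (pure_dev K' (restrict a K) x) = 0" if "K' \<subset> K" for K'
  proof -
    have "card K' < card K" using that by (simp add: psubset_card_mono)
    then have "K' \<notin> F" using Kmin by fastforce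
    then have "\<not> 0 < mext A p (pure_dev K' a x)" unfolding F_def by simp
    moreover have "pure_dev K' (restrict a K) x = pure_dev K' a x"
      using that by (intro pure_dev_restrict) auto
    ultimately show ?thesis using mext_nonneg[of A p "pure_dev K' a x", OF pnn pdnnx] by (metis less_eq_real_def)
  qed
  have isx: "is_exit A p x K (restrict a K)"
    unfolding is_exit_def
    using Kne a(1) Kpos sub0 pure_dev_restrict[of K K a x] by auto
  have c2: "2 \<le> card K"
  proof (rule ccontr)
    assume "\<not> 2 \<le> card K"
    moreover have "card K \<noteq> 0" using Kne by simp
    ultimately have "card K = 1" by linarith
    then obtain i where Ki: "K = {i}" using card_1_singletonE by blast
    obtain a' where a': "a' \<in> Pi\<^sub>E UNIV A" "0 < p a'" "\<forall>j. 0 < pure_dev {i} a x j (a' j)"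
      using Kpos Ki mext_pos[of A p "pure_dev {i} a x", OF pnn pdnnx fA] by blast
    have a'i: "a' i = a i"
    proof -
      have "0 < pure_dev {i} a x i (a' i)" using a'(3) by blast
      then show ?thesis by (auto simp: pure_dev_def split: if_splits)
    qed
    have a'o: "0 < xs k j (a' j)" if "j \<noteq> i" for j
    proof -
      have "0 < pure_dev {i} a x j (a' j)" using a'(3) by blast
      then show ?thesis using that supp by (auto simp: pure_dev_def)
    qed
    show False
    proof (cases "i \<in> J")
      case True
      have "{i} \<noteq> J" using cJ by auto
      then have "{i} \<subset> J" using True by blast
      then have z: "mext A p (pure_dev {i} aJ (xs k)) = 0" using ex unfolding is_exit_def by blast
      have "\<forall>j. 0 < pure_dev {i} aJ (xs k) j (a' j)"
        using a'i aJ[OF True] a'o unfolding pure_dev_def by auto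
      then have "0 < mext A p (pure_dev {i} aJ (xs k))"
        using a'(1,2) mext_pos[of A p "pure_dev {i} aJ (xs k)", OF pnn pdnn fA] by blast
      then show False using z by simp
    next
      case False
      have "\<forall>j. 0 < xs k j (a' j)" using a'i aout[OF False] a'o by (metis (full_types))
      then have "0 < mext A p (xs k)" using a'(1,2) mext_pos[of A p "xs k", OF pnn xsnn fA] by blast
      then show False using xs0 by simp
    qed
  qed
  have "(K, restrict a K) \<in> joint_exits A p x" unfolding joint_exits_def using isx c2 by auto
  then show ?thesis using xX by blast
qed

end
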